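(* Let $0<q<1$, $N$ a positive integer, $n\in\{0,1,\dots,N\}$, and $\gamma\in\mathbb{C}$ with $\gamma q,\gamma q^2,\gamma q^3\notin\{q^{-j}:j\in\mathbb{Z}_{\ge0}\}$. Then $${}_4\phi_3\!\left(\begin{matrix}q^{-2n-1},q^{-2(N-n)},q^{-x},-\gamma q^{x+1}\\ q^{-N},-q^{-N},\gamma q\end{matrix};q,q\right)=\frac{q^{-x}-\gamma q^{x+1}}{1-\gamma q}\;{}_4\phi_3\!\left(\begin{matrix}q^{-2n},q^{2n-2N+1},q^{-2x},\gamma^2q^{2x+2}\\ q^{-2N},\gamma q^2,\gamma q^3\end{matrix};q^2,q^2\right)$$ holds for all $x\in\mathbb{C}$ if $2n+1\le N$, and holds for $x\in\{0,1,\dots,N\}$ if $2n+1>N$.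
   Context: $(x;q)_k=\prod_{j=0}^{k-1}(1-xq^j)$. A terminating ${}_4\phi_3\!\left(\begin{matrix}a_1,\dots,a_4\\ b_1,b_2,b_3\end{matrix};p,p\right)$ (base $p$, here $p=q$ or $p=q^2$) means $\sum_{k=0}^K\frac{(a_1,\dots,a_4;p)_k}{(b_1,b_2,b_3,p;p)_k}p^k$, where $K$ is the smallest nonnegative integer such that some numerator parameter $a_i$ equals $p^{-K}$ (the sum is truncated at the first numerator parameter that causes termination). *)

theory Defs
  imports "HOL-Analysis.Analysis"
begin

definition qpoch :: "complex \<Rightarrow> complex \<Rightarrow> nat \<Rightarrow> complex" where
  "qpoch x p k = (\<Prod>j<k. (1 - x * p ^ j))"

definition qpw :: "real \<Rightarrow> complex \<Rightarrow> complex" where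
  "qpw q s = complex_of_real q powr s"

text \<open>Terminating 4phi3 with base p and argument p: the sum is truncated at the
  smallest K such that some numerator parameter equals p^(-K).\<close>
definition phi43_term_index :: "complex \<Rightarrow> complex \<Rightarrow> complex \<Rightarrow> complex \<Rightarrow> complex \<Rightarrow> nat" where
  "phi43_term_index a1 a2 a3 a4 p =
     (LEAST K. \<exists>a\<in>{a1, a2, a3, a4}. a = inverse (p ^ K))"

definition phi43 :: "complex \<Rightarrow> complex \<Rightarrow> complex \<Rightarrow> complex \<Rightarrow> complex \<Rightarrow> complex \<Rightarrow> complex
                      \<Rightarrow> complex \<Rightarrow> complex" where
  "phi43 a1 a2 a3 a4 b1 b2 b3 p =
     (\<Sum>k\<le>phi43_term_index a1 a2 a3 a4 p.
        (qpoch a1 p k * qpoch a2 p k * qpoch a3 p k * qpoch a4 p k)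
        / (qpoch b1 p k * qpoch b2 p k * qpoch b3 p k * qpoch p p k) * p ^ k)"

end

theory Submission
  imports Defs "HOL-Computational_Algebra.Polynomial"
begin

lemma qpoch_0[simp]: "qpoch x p 0 = 1" by (simp add: qpoch_def)
lemma qpoch_Suc: "qpoch x p (Suc k) = qpoch x p k * (1 - x * p^k)"
  by (simp add: qpoch_def)
lemma qpoch_Suc': "qpoch x p (Suc k) = (1 - x) * qpoch (x*p) p k"
proof (induction k)
  case 0 then show ?case by (simp add: qpoch_def)
next
  case (Suc k)
  have "qpoch x p (Suc (Suc k)) = qpoch x p (Suc k) * (1 - x*p^(Suc k))" by (rule qpoch_Suc)
  also have "\<dots> = (1-x) * qpoch (x*p) p k * (1 - x*p^Suc k)" using Suc.IH by simp
  also have "\<dots> = (1-x)*qpoch (x*p) p (Suc k)" by (simp add: qpoch_Suc algebra_simps)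
  finally show ?case .
qed

definition phi :: "complex \<Rightarrow> complex \<Rightarrow> complex \<Rightarrow> nat \<Rightarrow> complex" where
  "phi p C w k = qpoch (inverse w) p k * qpoch (C*p*w) p k"

definition Bc' :: "complex \<Rightarrow> complex \<Rightarrow> complex \<Rightarrow> complex \<Rightarrow> complex \<Rightarrow> complex \<Rightarrow> complex" where
  "Bc' p a b g d u = (1-a*p*u)*(1-b*d*p*u)*(1-g*p*u)*(1-g*d*u^2)"
definition Bc :: "complex \<Rightarrow> complex \<Rightarrow> complex \<Rightarrow> complex \<Rightarrow> complex \<Rightarrow> complex \<Rightarrow> complex" where
  "Bc p a b g d u = Bc' p a b g d u * (1-g*d*p*u)"
definition Dc' :: "complex \<Rightarrow> complex \<Rightarrow> complex \<Rightarrow> complex \<Rightarrow> complex \<Rightarrow> complex \<Rightarrow> complex" where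
  "Dc' p a b g d u = (1-d*u)*(b-g*u)*(a-g*d*u)*(1-g*d*p^2*u^2)"
definition Dc :: "complex \<Rightarrow> complex \<Rightarrow> complex \<Rightarrow> complex \<Rightarrow> complex \<Rightarrow> complex \<Rightarrow> complex" where
  "Dc p a b g d u = p*(1-u)*Dc' p a b g d u"
definition Wc :: "complex \<Rightarrow> complex \<Rightarrow> complex \<Rightarrow> complex" where
  "Wc p C u = (1-C*u^2)*(1-C*p*u^2)*(1-C*p^2*u^2)"
definition Ek :: "complex \<Rightarrow> complex \<Rightarrow> complex \<Rightarrow> nat \<Rightarrow> complex" where
  "Ek p a b k = (inverse (p^k) - 1) * (1 - a*b*p^(Suc k))"
definition rho :: "complex \<Rightarrow> complex \<Rightarrow> complex \<Rightarrow> complex \<Rightarrow> complex \<Rightarrow> nat \<Rightarrow> complex" where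
  "rho p a b g d k = - inverse (p^k) * (1-p^k)*(1-a*p^k)*(1-b*d*p^k)*(1-g*p^k)"

lemma core:
  fixes p u a b g d U iu ip iV P Q :: complex
  assumes "u*iu = 1" "p*ip=1" "p*U*iV = 1"
  shows "((1-a*p*u)*(1-b*d*p*u)*(1-g*p*u)*(1-g*d*u^2)) * ((1 - ip* iu)*P*Q*(1 - g*d*p*u*U)*(1 - g*d*p*u*(p*U)))
   - (((1-a*p*u)*(1-b*d*p*u)*(1-g*p*u)*(1-g*d*u^2))*(1-g*d*p*u) + p*(1-u)*((1-d*u)*(b-g*u)*(a-g*d*u)*(1-g*d*p^2*u^2))) * (P*(1-iu*U)*Q*(1-g*d*p*u*U))
   - u* (p*((1-d*u)*(b-g*u)*(a-g*d*u)*(1-g*d*p^2*u^2))) * (P*(1-iu*U)*(1-iu*(p*U))*(1-g*d*u)*Q)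
   = ((1-g*d*u^2)*(1-g*d*p*u^2)*(1-g*d*p^2*u^2)) * ((iV - 1)*(1 - a*b*(p*(p*U))) * (P*(1-iu*U)*Q*(1-g*d*p*u*U))
        + (- iV * (1-p*U)*(1-a*(p*U))*(1-b*d*(p*U))*(1-g*(p*U))) * (P*Q))"
  using assms by algebra

lemma opk:
  fixes p u a b g d :: complex
  assumes p: "p \<noteq> 0" and u: "u \<noteq> 0"
  shows "Bc p a b g d u * phi p (g*d) (p*u) k - (Bc p a b g d u + Dc p a b g d u) * phi p (g*d) u k
      + Dc p a b g d u * phi p (g*d) (u/p) k
      = Wc p (g*d) u * (Ek p a b k * phi p (g*d) u k + rho p a b g d k * phi p (g*d) u (k-1))"
proof (cases k)
  case 0
  then show ?thesis by (simp add: phi_def Ek_def rho_def)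
next
  case (Suc j)
  define C where "C = g*d"
  define P where "P = qpoch (inverse u) p j"
  define Q where "Q = qpoch (C*p*u) p j"
  define U where "U = p^j"
  have f1: "phi p C (p*u) (Suc j) * (1 - C*p*u) = (1 - inverse p * inverse u)*P*Q*(1 - C*p*u*U)*(1 - C*p*u*(p*U))"
  proof -
    have a1: "qpoch (inverse (p*u)) p (Suc j) = (1 - inverse p * inverse u) * P"
      unfolding qpoch_Suc'[of "inverse (p*u)"] P_def using p u
      by (simp add: field_simps)
    have "qpoch (C*p*u) p (Suc (Suc j)) = (1 - C*p*u) * qpoch (C*p*u*p) p (Suc j)"
      by (rule qpoch_Suc')
    moreover have "qpoch (C*p*u) p (Suc (Suc j)) = Q * (1 - C*p*u*U) * (1 - C*p*u*(p*U))"
      unfolding Q_def U_def by (simp add: qpoch_Suc)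
    ultimately have a2: "(1 - C*p*u) * qpoch (C*p*(p*u)) p (Suc j) = Q * (1 - C*p*u*U) * (1 - C*p*u*(p*U))"
      by (simp add: mult_ac)
    show ?thesis unfolding phi_def using a1 a2
      by (simp add: mult_ac)
  qed
  have f2: "phi p C (u/p) (Suc j) * (1 - inverse u) = P*(1-inverse u*U)*(1-inverse u*(p*U))*(1-C*u)*Q"
  proof -
    have "qpoch (inverse u) p (Suc (Suc j)) = (1 - inverse u) * qpoch (inverse u * p) p (Suc j)"
      by (rule qpoch_Suc')
    moreover have "qpoch (inverse u) p (Suc (Suc j)) = P*(1-inverse u*U)*(1-inverse u*(p*U))"
      unfolding P_def U_def by (simp add: qpoch_Suc)
    moreover have "inverse (u/p) = inverse u * p" using p u by (simp add: field_simps)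
    moreover have "qpoch (C*p*(u/p)) p (Suc j) = (1 - C*u) * Q"
      unfolding qpoch_Suc' Q_def using p by (simp add: field_simps)
    ultimately show ?thesis unfolding phi_def by (simp add: mult_ac)
  qed
  have f3: "phi p C u (Suc j) = P*(1-inverse u*U)*Q*(1-C*p*u*U)"
    unfolding phi_def P_def Q_def U_def by (simp add: qpoch_Suc mult_ac)
  have f4: "phi p C u j = P*Q" unfolding phi_def P_def Q_def by simp
  have e1: "Bc p a b g d u * phi p C (p*u) (Suc j) = Bc' p a b g d u * (phi p C (p*u) (Suc j) * (1 - C*p*u))"
    unfolding Bc_def C_def by (simp add: mult_ac)
  have e2: "Dc p a b g d u * phi p C (u/p) (Suc j) = - (u * (p * Dc' p a b g d u)) * (phi p C (u/p) (Suc j) * (1 - inverse u))"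
    unfolding Dc_def using u by (simp add: field_simps)
  have "Bc p a b g d u * phi p C (p*u) (Suc j) - (Bc p a b g d u + Dc p a b g d u) * phi p C u (Suc j)
      + Dc p a b g d u * phi p C (u/p) (Suc j)
      = Bc' p a b g d u * ((1 - inverse p * inverse u)*P*Q*(1 - C*p*u*U)*(1 - C*p*u*(p*U)))
       - (Bc' p a b g d u * (1-g*d*p*u) + Dc p a b g d u) * (P*(1-inverse u*U)*Q*(1-C*p*u*U))
       - u * (p * Dc' p a b g d u) * (P*(1-inverse u*U)*(1-inverse u*(p*U))*(1-C*u)*Q)"
    unfolding e1 e2 f1 f2 f3 by (simp add: Bc_def)
  also have "\<dots> = Wc p C u * ((inverse (p*U) - 1)*(1 - a*b*(p*(p*U))) * (P*(1-inverse u*U)*Q*(1-C*p*u*U))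
        + (- inverse (p*U) * (1-p*U)*(1-a*(p*U))*(1-b*d*(p*U))*(1-g*(p*U))) * (P*Q))"
    unfolding Bc'_def Dc_def Dc'_def Wc_def C_def
    by (rule core) (use p u in \<open>auto simp: U_def field_simps\<close>)
  also have "\<dots> = Wc p C u * (Ek p a b k * phi p C u k + rho p a b g d k * phi p C u (k-1))"
    unfolding Suc Ek_def rho_def by (simp add: f3 f4 mult_ac flip: U_def)
  finally show ?thesis unfolding C_def Suc .
qed


definition GS :: "(nat \<Rightarrow> complex) \<Rightarrow> complex \<Rightarrow> complex \<Rightarrow> nat \<Rightarrow> complex \<Rightarrow> complex" where
  "GS a p C M w = (\<Sum>k\<le>M. a k * phi p C w k)"

lemma rec_sum:
  fixes p u a b g d E :: complex and c :: "nat \<Rightarrow> complex"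
  assumes p: "p \<noteq> 0" and u: "u \<noteq> 0"
    and coef: "\<And>k. k < M \<Longrightarrow> c (Suc k) * rho p a b g d (Suc k) = - (Ek p a b k - E) * c k"
    and top: "Ek p a b M = E"
  shows "Bc p a b g d u * GS c p (g*d) M (p*u) - (Bc p a b g d u + Dc p a b g d u) * GS c p (g*d) M u
      + Dc p a b g d u * GS c p (g*d) M (u/p) = Wc p (g*d) u * E * GS c p (g*d) M u"
proof -
  define f where "f k = phi p (g*d) u k" for k
  have "Bc p a b g d u * GS c p (g*d) M (p*u) - (Bc p a b g d u + Dc p a b g d u) * GS c p (g*d) M u
      + Dc p a b g d u * GS c p (g*d) M (u/p)
      = (\<Sum>k\<le>M. c k * (Bc p a b g d u * phi p (g*d) (p*u) k - (Bc p a b g d u + Dc p a b g d u) * phi p (g*d) u k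
      + Dc p a b g d u * phi p (g*d) (u/p) k))"
    unfolding GS_def by (simp add: sum_distrib_left sum_subtractf sum.distrib algebra_simps)
  also have "\<dots> = (\<Sum>k\<le>M. c k * (Wc p (g*d) u * (Ek p a b k * f k + rho p a b g d k * f (k-1))))"
    unfolding f_def using opk[OF p u] by simp
  also have "\<dots> = Wc p (g*d) u * ((\<Sum>k\<le>M. c k * Ek p a b k * f k) + (\<Sum>k\<le>M. c k * rho p a b g d k * f (k-1)))"
    by (simp add: sum_distrib_left sum.distrib algebra_simps)
  also have "(\<Sum>k\<le>M. c k * rho p a b g d k * f (k-1)) = (\<Sum>k<M. c (Suc k) * rho p a b g d (Suc k) * f k)"
    by (subst sum.atMost_shift) (simp add: rho_def)
  also have "\<dots> = (\<Sum>k<M. - (Ek p a b k - E) * c k * f k)"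
    by (rule sum.cong) (auto simp: coef)
  also have "(\<Sum>k\<le>M. c k * Ek p a b k * f k) = (\<Sum>k<M. c k * Ek p a b k * f k) + c M * E * f M"
    by (simp add: top flip: lessThan_Suc_atMost)
  also have "(\<Sum>k<M. c k * Ek p a b k * f k) + c M * E * f M + (\<Sum>k<M. - (Ek p a b k - E) * c k * f k)
     = E * ((\<Sum>k<M. c k * f k) + c M * f M)"
    by (simp add: sum_distrib_left sum.distrib[symmetric] algebra_simps)
  also have "(\<Sum>k<M. c k * f k) + c M * f M = GS c p (g*d) M u"
    unfolding GS_def f_def by (simp flip: lessThan_Suc_atMost)
  finally show ?thesis by (simp add: mult_ac)
qed

definition cf :: "complex \<Rightarrow> complex \<Rightarrow> complex \<Rightarrow> complex \<Rightarrow> complex \<Rightarrow> complex \<Rightarrow> nat \<Rightarrow> complex" where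
  "cf A1 A2 B1 B2 B3 p k = qpoch A1 p k * qpoch A2 p k / (qpoch B1 p k * qpoch B2 p k * qpoch B3 p k * qpoch p p k) * p^k"

lemma cf_coef:
  fixes A1 A2 B1 B2 B3 p a b g d E :: complex
  assumes p: "p \<noteq> 0"
    and n1: "qpoch B1 p (Suc k) \<noteq> 0" and n2: "qpoch B2 p (Suc k) \<noteq> 0"
    and n3: "qpoch B3 p (Suc k) \<noteq> 0" and n4: "qpoch p p (Suc k) \<noteq> 0"
    and hB1: "B1 = a*p" and hB2: "B2 = b*d*p" and hB3: "B3 = g*p"
    and hA: "A1*A2 = a*b*p" and hE: "E = (A1-1)*(1-A2)"
  shows "cf A1 A2 B1 B2 B3 p (Suc k) * rho p a b g d (Suc k) = - (Ek p a b k - E) * cf A1 A2 B1 B2 B3 p k"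
proof -
  define P where "P = p^k"
  have P: "P \<noteq> 0" using p by (simp add: P_def)
  have eE: "Ek p a b k - E = inverse P * (1 - A1*P) * (1 - A2*P)"
  proof -
    have "Ek p a b k - E = (inverse P - 1) * (1 - (A1*A2)*P) - (A1-1)*(1-A2)"
      unfolding Ek_def hE P_def hA by (simp add: algebra_simps)
    also have "\<dots> = inverse P * (1 - A1*P) * (1 - A2*P)"
      using P by (simp add: field_simps)
    finally show ?thesis .
  qed
  have nn: "qpoch B1 p k \<noteq> 0" "1 - B1*P \<noteq> 0" "qpoch B2 p k \<noteq> 0" "1 - B2*P \<noteq> 0"
     "qpoch B3 p k \<noteq> 0" "1 - B3*P \<noteq> 0" "qpoch p p k \<noteq> 0" "1 - p*P \<noteq> 0"
    using n1 n2 n3 n4 unfolding qpoch_Suc P_def by auto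
  have r: "rho p a b g d (Suc k) = - inverse (p*P) * ((1-B1*P)*(1-B2*P)*(1-B3*P)*(1-p*P))"
    unfolding rho_def P_def hB1 hB2 hB3 by (simp add: mult_ac)
  have cfS: "cf A1 A2 B1 B2 B3 p (Suc k) = cf A1 A2 B1 B2 B3 p k *
      ((1-A1*P)*(1-A2*P)*p / ((1-B1*P)*(1-B2*P)*(1-B3*P)*(1-p*P)))"
    using nn p unfolding cf_def qpoch_Suc P_def by (simp add: field_simps)
  show ?thesis
  proof -
    have Y: "(1-B1*P)*(1-B2*P)*(1-B3*P)*(1-p*P) \<noteq> 0" using nn by simp
    have gen: "\<And>c A Y. Y \<noteq> 0 \<Longrightarrow> c * ((A*p)/Y) * (- inverse (p*P) * Y) = - (inverse P * A) * c"
      using p P by (simp add: field_simps)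
    show ?thesis unfolding eE r cfS
      using gen[OF Y, of "cf A1 A2 B1 B2 B3 p k" "(1-A1*P)*(1-A2*P)"] by (simp add: mult_ac)
  qed
qed


lemma qpw_exp: "0 < q \<Longrightarrow> qpw q s = exp (s * of_real (ln q))"
  unfolding qpw_def powr_def by (simp add: Ln_of_real)

lemma qpw_add: "0 < q \<Longrightarrow> qpw q (a + b) = qpw q a * qpw q b"
  by (simp add: qpw_exp distrib_right exp_add)

lemma qpw_minus: "0 < q \<Longrightarrow> qpw q (- a) = inverse (qpw q a)"
  by (simp add: qpw_exp exp_minus)

lemma qpw_nz: "0 < q \<Longrightarrow> qpw q a \<noteq> 0"
  by (simp add: qpw_exp)

lemma qpw_nat: "0 < q \<Longrightarrow> qpw q (of_nat k) = (of_real q) ^ k"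
proof -
  assume q: "0 < q"
  have "qpw q (of_nat k) = exp (of_real (ln q)) ^ k"
    by (simp add: qpw_exp q exp_of_nat_mult)
  also have "exp (of_real (ln q) :: complex) = of_real q" using q
    by (simp add: exp_of_real)
  finally show ?thesis .
qed

lemma qpw_1: "0 < q \<Longrightarrow> qpw q 1 = of_real q"
  using qpw_nat[of q 1] by simp
lemma qpw_2: "0 < q \<Longrightarrow> qpw q 2 = (of_real q)^2"
  using qpw_nat[of q 2] by simp
lemma qpw_3: "0 < q \<Longrightarrow> qpw q 3 = (of_real q)^3"
  using qpw_nat[of q 3] by simp

lemma qpoch_zero:
  assumes "x * p^K = 1" "K < k"
  shows "qpoch x p k = 0"
  unfolding qpoch_def using assms by (intro prod_zero) auto

lemma phi43_GS:
  fixes p w C a1 a2 a3 a4 b1 b2 b3 :: complex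
  assumes p: "p \<noteq> 0" and a3: "a3 = inverse w" and a4: "a4 = C*p*w"
    and ex: "K' \<le> M" "\<exists>a\<in>{a1,a2,a3,a4}. a = inverse (p ^ K')"
  shows "phi43 a1 a2 a3 a4 b1 b2 b3 p = GS (cf a1 a2 b1 b2 b3 p) p C M w"
proof -
  define K where "K = phi43_term_index a1 a2 a3 a4 p"
  have KM: "K \<le> M" unfolding K_def phi43_term_index_def
    using ex by (meson Least_le le_trans)
  have Kex: "\<exists>a\<in>{a1,a2,a3,a4}. a = inverse (p ^ K)" unfolding K_def phi43_term_index_def
    by (rule LeastI[of "\<lambda>K. \<exists>a\<in>{a1,a2,a3,a4}. a = inverse (p ^ K)" K'], rule ex(2))
  define t where "t k = (qpoch a1 p k * qpoch a2 p k * qpoch a3 p k * qpoch a4 p k)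
        / (qpoch b1 p k * qpoch b2 p k * qpoch b3 p k * qpoch p p k) * p ^ k" for k
  have tz: "t k = 0" if "K < k" for k
  proof -
    from Kex obtain a where a: "a \<in> {a1,a2,a3,a4}" "a = inverse (p^K)" by blast
    have "a * p^K = 1" using a(2) p by simp
    then have "qpoch a p k = 0" using qpoch_zero that by blast
    then show ?thesis using a(1) unfolding t_def by auto
  qed
  have "phi43 a1 a2 a3 a4 b1 b2 b3 p = (\<Sum>k\<le>K. t k)"
    unfolding phi43_def t_def K_def ..
  also have "\<dots> = (\<Sum>k\<le>M. t k)"
    by (rule sum.mono_neutral_left) (use KM tz in auto)
  also have "\<dots> = GS (cf a1 a2 b1 b2 b3 p) p C M w"
    unfolding GS_def cf_def phi_def t_def a3 a4 by (simp add: divide_inverse mult_ac)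
  finally show ?thesis .
qed


definition lam :: "complex \<Rightarrow> complex \<Rightarrow> complex \<Rightarrow> complex" where
  "lam qq g w = inverse w - g*qq*w"

lemma gauge1:
  fixes qq iq g u iu X :: complex
  assumes "qq*iq = 1" "u*iu = 1"
  shows "Bc qq (X*iq) (X*iq) g (-1) u * (iq*iu - g*qq^2*u) * ((1-g*u^2)*(1-g*qq*u^2)*(1-g*qq^2*u^2))
       = ((iu - g*qq*u)*iq) * Bc (qq^2) (X^2*iq^2) qq (g*qq) (g*iq) (u^2)"
  using assms unfolding Bc_def Bc'_def by algebra

lemma gauge2:
  fixes qq iq g u iu X :: complex
  assumes "qq*iq = 1" "u*iu = 1"
  shows "Dc qq (X*iq) (X*iq) g (-1) u * (qq*iu - g*u) * ((1-g*u^2)*(1-g*qq*u^2)*(1-g*qq^2*u^2))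
       = ((iu - g*qq*u)*iq) * Dc (qq^2) (X^2*iq^2) qq (g*qq) (g*iq) (u^2)"
  using assms unfolding Dc_def Dc'_def by algebra

lemma gauge3:
  fixes qq iq g u iu X Y Z :: complex
  assumes "qq*iq = 1" "u*iu = 1" "Y*Z = 1"
  shows "(Bc qq (X*iq) (X*iq) g (-1) u + Dc qq (X*iq) (X*iq) g (-1) u
          + Wc qq (g*(-1)) u * ((Y*iq - 1)*(1 - X^2*Z))) * (iu - g*qq*u) * ((1-g*u^2)*(1-g*qq*u^2)*(1-g*qq^2*u^2))
       = ((iu - g*qq*u)*iq) * (Bc (qq^2) (X^2*iq^2) qq (g*qq) (g*iq) (u^2) + Dc (qq^2) (X^2*iq^2) qq (g*qq) (g*iq) (u^2)
          + Wc (qq^2) (g*qq*(g*iq)) (u^2) * ((Y - 1)*(1 - qq*Z*X^2)))"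
  using assms unfolding Bc_def Bc'_def Dc_def Dc'_def Wc_def by algebra


lemma swap12: "(a - 1)*(1 - b) = (b - 1)*(1 - (a::complex))" by (simp add: algebra_simps)

lemma qpoch_nz: "(\<And>j. j < k \<Longrightarrow> x*p^j \<noteq> 1) \<Longrightarrow> qpoch x p k \<noteq> 0"
  unfolding qpoch_def by (auto simp: prod_zero_iff)

lemma qpow_neq:
  fixes q :: real
  assumes "0 < q" "q < 1" "a \<noteq> b"
  shows "(of_real q :: complex)^a \<noteq> of_real q^b"
proof -
  have "q^a \<noteq> q^b"
  proof (cases "a < b")
    case True
    have "q^b < q^a" by (rule power_strict_decreasing) (use True assms in auto)
    then show ?thesis by simp
  next
    case False then have "b < a" using assms by auto
    have "q^a < q^b" by (rule power_strict_decreasing) (use \<open>b < a\<close> assms in auto)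
    then show ?thesis by simp
  qed
  then show ?thesis by (metis of_real_eq_iff of_real_power)
qed

lemma qpow_pos: "0 < q \<Longrightarrow> (of_real q :: complex)^a = of_real (q^a)" by simp

context
  fixes q :: real and N n :: nat and g :: complex and M :: nat
  assumes q0: "0 < q" and q1: "q < 1" and nN: "n \<le> N"
    and hg1: "\<forall>j\<le>2*N+3. g * of_real q ^ j \<noteq> 1" and hg2: "\<forall>j\<le>2*N+3. g * of_real q ^ j \<noteq> -1"
    and hM: "(M = 2*n+1 \<and> 2*n+1 \<le> N) \<or> (M = 2*(N-n) \<and> N < 2*n+1)"
begin

abbreviation "qq \<equiv> (complex_of_real q)"
abbreviation "iq \<equiv> inverse qq"
abbreviation "XX \<equiv> inverse (qq^N)"

lemma qq_nz: "qq \<noteq> 0" using q0 by simp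

definition "cL = cf (inverse (qq^(2*n+1))) (inverse (qq^(2*(N-n)))) XX (-XX) (g*qq) qq"
definition "cR = cf (inverse ((qq^2)^n)) (qq^(2*n+1) * inverse (qq^(2*N))) (inverse ((qq^2)^N)) (g*qq^2) (g*qq^3) (qq^2)"
definition "EL = (inverse (qq^(2*n+1)) - 1) * (1 - inverse (qq^(2*(N-n))))"
definition "ER = (inverse ((qq^2)^n) - 1) * (1 - qq^(2*n+1) * inverse (qq^(2*N)))"
definition "FL u = GS cL qq (g*(-1)) M u"
definition "SRf v = GS cR (qq^2) (g*qq*(g*iq)) n v"
definition "HR u = lam qq g u / (1 - g*qq) * SRf (u^2)"

lemma M_le: "M \<le> N" using hM by auto

lemma X_neq: "j < N \<Longrightarrow> XX * qq^j \<noteq> 1"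
  using qpow_neq[OF q0 q1, of j N] qq_nz by (auto simp: field_simps)

lemma recL:
  assumes u: "u \<noteq> 0"
  shows "Bc qq (XX*iq) (XX*iq) g (-1) u * FL (qq*u) - (Bc qq (XX*iq) (XX*iq) g (-1) u + Dc qq (XX*iq) (XX*iq) g (-1) u) * FL u
      + Dc qq (XX*iq) (XX*iq) g (-1) u * FL (u/qq) = Wc qq (g*(-1)) u * EL * FL u"
  unfolding FL_def
proof (rule rec_sum[OF qq_nz u])
  fix k assume k: "k < M"
  show "cL (Suc k) * rho qq (XX*iq) (XX*iq) g (-1) (Suc k) = - (Ek qq (XX*iq) (XX*iq) k - EL) * cL k"
    unfolding cL_def
  proof (rule cf_coef[OF qq_nz])
    show "qpoch XX qq (Suc k) \<noteq> 0" using k M_le by (intro qpoch_nz X_neq) auto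
    show "qpoch (-XX) qq (Suc k) \<noteq> 0"
    proof (rule qpoch_nz)
      fix j have "-XX*qq^j = - of_real (q^j / q^N)" by (simp add: field_simps)
      moreover have "q^j / q^N > 0" using q0 by simp
      ultimately show "-XX*qq^j \<noteq> 1"
        by (metis add.inverse_inverse dual_order.asym neg_0_less_iff_less of_real_1 of_real_eq_iff of_real_minus zero_less_one)
    qed
    show "qpoch (g*qq) qq (Suc k) \<noteq> 0"
    proof (rule qpoch_nz)
      fix j assume "j < Suc k"
      then have "Suc j \<le> 2*N+3" using k M_le by auto
      then show "g*qq*qq^j \<noteq> 1" using hg1[rule_format, of "Suc j"] by (simp add: mult_ac)
    qed
    show "qpoch qq qq (Suc k) \<noteq> 0"
    proof (rule qpoch_nz)
      fix j show "qq*qq^j \<noteq> 1" using qpow_neq[OF q0 q1, of "Suc j" 0] by simp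
    qed
    show "XX = XX*iq*qq" using qq_nz by simp
    show "-XX = XX*iq*(-1)*qq" using qq_nz by simp
    show "g*qq = g*qq" ..
    show "inverse (qq^(2*n+1)) * inverse (qq^(2*(N-n))) = XX*iq*(XX*iq)*qq"
    proof -
      have e: "(2*n+1) + 2*(N-n) + 1 = (N+1) + (N+1)" using nN by simp
      have "qq^(2*n+1) * qq^(2*(N-n)) * qq = qq^((2*n+1) + 2*(N-n) + 1)" by (simp add: power_add)
      also have "\<dots> = qq^((N+1)+(N+1))" using e by simp
      also have "\<dots> = qq^N * qq * (qq^N * qq)" by (simp add: power_add)
      finally have "qq^(2*n+1) * qq^(2*(N-n)) * qq = qq^N * qq * (qq^N * qq)" .
      then show ?thesis using qq_nz by (simp add: field_simps)
    qed
    show "EL = (inverse (qq^(2*n+1)) - 1) * (1 - inverse (qq^(2*(N-n))))" by (simp add: EL_def)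
  qed
next
  show "Ek qq (XX*iq) (XX*iq) M = EL"
  proof -
    have e1: "2*N+2 = 2*(N-n) + (2*n+2)" using nN by simp
    have pw: "qq^(2*N+2) = qq^(2*(N-n)) * qq^(2*n+2)" by (subst e1) (rule power_add)
    have e2: "2*N+2 = (2*n+1) + (2*(N-n)+1)" using nN by simp
    have pw2: "qq^(2*N+2) = qq^(2*n+1) * qq^(2*(N-n)+1)" by (subst e2) (rule power_add)
    have k1: "XX*iq*(XX*iq) = inverse (qq^(2*N+2))"
    proof -
      have "2*N+2 = Suc N + Suc N" by simp
      then have "qq^(2*N+2) = qq^(Suc N) * qq^(Suc N)" by (metis power_add)
      then have "inverse (qq^(2*N+2)) = inverse (qq^(Suc N)) * inverse (qq^(Suc N))"
        by (metis inverse_mult_distrib)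
      then show ?thesis apply (simp add: mult_ac) by metis
    qed
    from hM show ?thesis
    proof
      assume h: "M = 2*n+1 \<and> 2*n+1 \<le> N"
      have "XX*iq*(XX*iq)*qq^(Suc M) = inverse (qq^(2*(N-n)))"
        unfolding k1 pw h[THEN conjunct1] using qq_nz by (simp add: field_simps)
      then show ?thesis unfolding Ek_def EL_def h[THEN conjunct1] by simp
    next
      assume h: "M = 2*(N-n) \<and> N < 2*n+1"
      have "XX*iq*(XX*iq)*qq^(Suc M) = inverse (qq^(2*n+1))"
        unfolding k1 pw2 h[THEN conjunct1] using qq_nz by (simp add: field_simps)
      then show ?thesis unfolding Ek_def EL_def h[THEN conjunct1]
        by (metis (no_types, lifting) swap12)
    qed
  qed
qed
lemma recR:
  assumes v: "y \<noteq> 0"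
  shows "Bc (qq^2) (XX^2*iq^2) qq (g*qq) (g*iq) y * SRf (qq^2*y)
      - (Bc (qq^2) (XX^2*iq^2) qq (g*qq) (g*iq) y + Dc (qq^2) (XX^2*iq^2) qq (g*qq) (g*iq) y) * SRf y
      + Dc (qq^2) (XX^2*iq^2) qq (g*qq) (g*iq) y * SRf (y/qq^2) = Wc (qq^2) (g*qq*(g*iq)) y * ER * SRf y"
  unfolding SRf_def
proof (rule rec_sum)
  show "qq^2 \<noteq> 0" using qq_nz by simp
  show "y \<noteq> 0" by (rule v)
  fix k assume k: "k < n"
  show "cR (Suc k) * rho (qq^2) (XX^2*iq^2) qq (g*qq) (g*iq) (Suc k) = - (Ek (qq^2) (XX^2*iq^2) qq k - ER) * cR k"
    unfolding cR_def
  proof (rule cf_coef)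
    show "qq^2 \<noteq> 0" using qq_nz by simp
    show "qpoch (inverse ((qq^2)^N)) (qq^2) (Suc k) \<noteq> 0"
    proof (rule qpoch_nz)
      fix j assume "j < Suc k"
      then have "2*j \<noteq> 2*N" using k nN by auto
      then have "qq^(2*j) \<noteq> qq^(2*N)" by (rule qpow_neq[OF q0 q1])
      then show "inverse ((qq^2)^N) * (qq^2)^j \<noteq> 1" using qq_nz
        by (simp add: field_simps flip: power_mult)
    qed
    show "qpoch (g*qq^2) (qq^2) (Suc k) \<noteq> 0"
    proof (rule qpoch_nz)
      fix j assume "j < Suc k"
      then have "2*j+2 \<le> 2*N+3" using k nN by auto
      then have "g * qq^(2*j+2) \<noteq> 1" using hg1 by blast
      then show "g*qq^2 * (qq^2)^j \<noteq> 1"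
        by (simp add: field_simps flip: power_mult power_add power_Suc)
    qed
    show "qpoch (g*qq^3) (qq^2) (Suc k) \<noteq> 0"
    proof (rule qpoch_nz)
      fix j assume "j < Suc k"
      then have "2*j+3 \<le> 2*N+3" using k nN by auto
      then have "g * qq^(2*j+3) \<noteq> 1" using hg1 by blast
      then show "g*qq^3 * (qq^2)^j \<noteq> 1"
        by (simp add: field_simps flip: power_mult power_add power_Suc)
    qed
    show "qpoch (qq^2) (qq^2) (Suc k) \<noteq> 0"
    proof (rule qpoch_nz)
      fix j
      have "qq^(2*j+2) \<noteq> qq^0" by (rule qpow_neq[OF q0 q1]) simp
      then show "qq^2 * (qq^2)^j \<noteq> 1"
        by (simp add: field_simps flip: power_mult power_add power_Suc)
    qed
    show "inverse ((qq^2)^N) = XX^2*iq^2*qq^2" using qq_nz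
      by (simp add: field_simps flip: power_mult power_add power_Suc)
    show "g*qq^2 = qq*(g*iq)*qq^2" using qq_nz by (simp add: field_simps)
    show "g*qq^3 = g*qq*qq^2" by (simp add: eval_nat_numeral)
    show "inverse ((qq^2)^n) * (qq^(2*n+1) * inverse (qq^(2*N))) = XX^2*iq^2*qq*qq^2"
      using qq_nz nN by (simp add: field_simps flip: power_mult power_add power_Suc) (simp add: eval_nat_numeral)
    show "ER = (inverse ((qq^2)^n) - 1) * (1 - qq^(2*n+1) * inverse (qq^(2*N)))" by (simp add: ER_def)
  qed
next
  have "XX^2*iq^2*qq*(qq^2)^(Suc n) = qq^(2*n+1) * inverse (qq^(2*N))"
    using qq_nz nN by (simp add: field_simps flip: power_mult power_add power_Suc)
  then show "Ek (qq^2) (XX^2*iq^2) qq n = ER" unfolding Ek_def ER_def by simp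
qed

lemma comb:
  fixes BL DL WL EE BR DR WR ER l0 l1 l2 z0 z1 z2 T k :: complex
  assumes "BL * l1 * T = k * BR" "DL * l2 * T = k * DR" "(BL+DL+WL * EE) * l0 * T = k * (BR+DR+WR * ER)"
    "BR * z1 - (BR+DR) * z0 + DR * z2 = WR * ER * z0"
  shows "T * (BL * (l1 * z1) - (BL+DL) * (l0 * z0) + DL * (l2 * z2) - WL * EE * (l0 * z0)) = 0"
  using assms by algebra

lemma fin:
  fixes BL DL WL EE l0 l1 l2 z0 z1 z2 K :: complex
  assumes "K \<noteq> 0" "BL * (l1 * z1) - (BL+DL) * (l0 * z0) + DL * (l2 * z2) - WL * EE * (l0 * z0) = 0"
  shows "BL * (l1 / K * z1) - (BL+DL) * (l0 / K * z0) + DL * (l2 / K * z2) = WL * EE * (l0 / K * z0)"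
proof -
  have "BL * (l1 / K * z1) - (BL+DL) * (l0 / K * z0) + DL * (l2 / K * z2) - WL * EE * (l0 / K * z0)
     = (BL * (l1 * z1) - (BL+DL) * (l0 * z0) + DL * (l2 * z2) - WL * EE * (l0 * z0)) / K"
    using assms(1) by (simp add: field_simps)
  then show ?thesis using assms by simp
qed

definition "TT u = (1-g*u^2)*(1-g*qq*u^2)*(1-g*qq^2*u^2)"

lemma recH:
  assumes u: "u \<noteq> 0" and T: "TT u \<noteq> 0" and K: "1 - g*qq \<noteq> 0"
  shows "Bc qq (XX*iq) (XX*iq) g (-1) u * HR (qq*u) - (Bc qq (XX*iq) (XX*iq) g (-1) u + Dc qq (XX*iq) (XX*iq) g (-1) u) * HR u
      + Dc qq (XX*iq) (XX*iq) g (-1) u * HR (u/qq) = Wc qq (g*(-1)) u * EL * HR u"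
proof -
  define iu where "iu = inverse u"
  define Y where "Y = inverse (qq^(2*n))"
  define Z where "Z = qq^(2*n)"
  have hq: "qq*iq = 1" using qq_nz by simp
  have hu: "u*iu = 1" using u by (simp add: iu_def)
  have hY: "Y*Z = 1" using qq_nz by (simp add: Y_def Z_def)
  have EL': "EL = (Y*iq - 1)*(1 - XX^2*Z)"
  proof -
    have "inverse (qq^(2*n+1)) = Y*iq" unfolding Y_def by simp
    moreover have "inverse (qq^(2*(N-n))) = XX^2*Z"
    proof -
      have e: "n*2 + (N-n)*2 = N*2" using nN by simp
      show ?thesis unfolding Z_def using qq_nz
        by (simp add: field_simps e flip: power_mult power_add power_Suc)
    qed
    ultimately show ?thesis unfolding EL_def by simp
  qed
  have ER': "ER = (Y - 1)*(1 - qq*Z*XX^2)"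
  proof -
    have "inverse ((qq^2)^n) = Y" unfolding Y_def by (simp flip: power_mult)
    moreover have "qq^(2*n+1) * inverse (qq^(2*N)) = qq*Z*XX^2" unfolding Z_def using qq_nz nN
      by (simp add: field_simps flip: power_mult power_add power_Suc)
    ultimately show ?thesis unfolding ER_def by simp
  qed
  have l1: "lam qq g (qq*u) = iq*iu - g*qq^2*u" unfolding lam_def iu_def by (simp add: power2_eq_square mult_ac)
  have l2: "lam qq g (u/qq) = qq*iu - g*u" unfolding lam_def iu_def using qq_nz by (simp add: field_simps)
  have l0: "lam qq g u = iu - g*qq*u" unfolding lam_def iu_def by simp
  define s1 where "s1 = SRf ((qq*u)^2)"
  define s0 where "s0 = SRf (u^2)"
  define s2 where "s2 = SRf ((u/qq)^2)"
  have rR: "Bc (qq^2) (XX^2*iq^2) qq (g*qq) (g*iq) (u^2) * s1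
      - (Bc (qq^2) (XX^2*iq^2) qq (g*qq) (g*iq) (u^2) + Dc (qq^2) (XX^2*iq^2) qq (g*qq) (g*iq) (u^2)) * s0
      + Dc (qq^2) (XX^2*iq^2) qq (g*qq) (g*iq) (u^2) * s2 = Wc (qq^2) (g*qq*(g*iq)) (u^2) * ((Y - 1)*(1 - qq*Z*XX^2)) * s0"
    using recR[of "u^2"] u unfolding s1_def s0_def s2_def ER'
    by (simp add: power_mult_distrib power_divide)
  note G1 = gauge1[where g=g and X=XX, OF hq hu]
  note G2 = gauge2[where g=g and X=XX, OF hq hu]
  note G3 = gauge3[where g=g and X=XX, OF hq hu hY]
  have e0: "TT u * (Bc qq (XX*iq) (XX*iq) g (-1) u * ((iq*iu - g*qq^2*u) * s1)
       - (Bc qq (XX*iq) (XX*iq) g (-1) u + Dc qq (XX*iq) (XX*iq) g (-1) u) * ((iu - g*qq*u) * s0)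
       + Dc qq (XX*iq) (XX*iq) g (-1) u * ((qq*iu - g*u) * s2)
       - Wc qq (g*(-1)) u * ((Y*iq - 1)*(1 - XX^2*Z)) * ((iu - g*qq*u) * s0)) = 0"
    unfolding TT_def by (rule comb[OF G1 G2 G3 rR])
  then have e1: "Bc qq (XX*iq) (XX*iq) g (-1) u * ((iq*iu - g*qq^2*u) * s1)
       - (Bc qq (XX*iq) (XX*iq) g (-1) u + Dc qq (XX*iq) (XX*iq) g (-1) u) * ((iu - g*qq*u) * s0)
       + Dc qq (XX*iq) (XX*iq) g (-1) u * ((qq*iu - g*u) * s2)
       - Wc qq (g*(-1)) u * ((Y*iq - 1)*(1 - XX^2*Z)) * ((iu - g*qq*u) * s0) = 0"
    using T by simp
  show ?thesis
    unfolding HR_def l0 l1 l2 EL' s1_def[symmetric] s0_def[symmetric] s2_def[symmetric]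
    by (rule fin[OF K e1])
qed

lemma h1: "j \<le> 2*N+3 \<Longrightarrow> 1 - g*qq^j \<noteq> 0" using hg1 by auto
lemma h2: "j \<le> 2*N+3 \<Longrightarrow> 1 + g*qq^j \<noteq> 0" using hg2 by (auto simp: add_eq_0_iff)

lemma BL_nz:
  assumes "m < N"
  shows "Bc qq (XX*iq) (XX*iq) g (-1) (qq^m) \<noteq> 0"
proof -
  have a: "1 - XX*iq*qq*qq^m \<noteq> 0"
  proof -
    have e: "XX*iq*qq = XX" using qq_nz by simp
    show ?thesis unfolding e using X_neq[OF assms] by simp
  qed
  have b: "1 - XX*iq*(-1)*qq*qq^m \<noteq> 0"
  proof -
    have "1 - XX*iq*(-1)*qq*qq^m = of_real (1 + q^m / q^N)" using qq_nz by (simp add: field_simps)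
    moreover have "1 + q^m / q^N > 0" using q0 by (simp add: add_pos_pos)
    ultimately show ?thesis by (metis of_real_eq_0_iff order_less_irrefl)
  qed
  have c: "1 - g*qq*qq^m \<noteq> 0" using h1[of "Suc m"] assms by (simp add: mult_ac)
  have d: "1 - g*(-1)*(qq^m)^2 \<noteq> 0" using h2[of "2*m"] assms by (simp add: power_mult mult_ac)
  have e: "1 - g*(-1)*qq*qq^m \<noteq> 0" using h2[of "Suc m"] assms by (simp add: mult_ac)
  show ?thesis unfolding Bc_def Bc'_def using a b c d e by simp
qed

lemma TT_nz:
  assumes "m \<le> N"
  shows "TT (qq^m) \<noteq> 0"
proof -
  have a: "1 - g*(qq^m)^2 \<noteq> 0" using h1[of "2*m"] assms by (simp add: power_mult mult_ac)
  have b: "1 - g*qq*(qq^m)^2 \<noteq> 0" using h1[of "Suc (2*m)"] assms by (simp add: power_mult mult_ac)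
  have c: "1 - g*qq^2*(qq^m)^2 \<noteq> 0" using h1[of "Suc (Suc (2*m))"] assms by (simp add: power_mult mult_ac power2_eq_square)
  show ?thesis unfolding TT_def using a b c by simp
qed

lemma K_nz: "1 - g*qq \<noteq> 0" using h1[of 1] by simp

lemma GS_one: "GS c p C M' 1 = c 0"
proof -
  have "GS c p C M' 1 = c 0 * phi p C 1 0 + (\<Sum>k<M'. c (Suc k) * phi p C 1 (Suc k))"
    unfolding GS_def by (rule sum.atMost_shift)
  also have "(\<Sum>k<M'. c (Suc k) * phi p C 1 (Suc k)) = 0"
    by (rule sum.neutral) (simp add: phi_def qpoch_Suc')
  finally show ?thesis by (simp add: phi_def)
qed

lemma FL_1: "FL 1 = 1" unfolding FL_def GS_one cL_def cf_def by simp
lemma HR_1: "HR 1 = 1"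
  unfolding HR_def SRf_def lam_def using K_nz by (simp add: GS_one cR_def cf_def)

lemma stepeq:
  fixes B D W E f0 f1 f2 h0 h1 h2 :: complex
  assumes "B * f1 - (B+D) * f0 + D * f2 = W * E * f0" "B * h1 - (B+D) * h0 + D * h2 = W * E * h0"
    "f0 = h0" "D * f2 = D * h2" "B \<noteq> 0"
  shows "f1 = h1"
proof -
  have "B * f1 = B * h1" using assms(1-4) by algebra
  then show ?thesis using assms(5) by simp
qed

lemma FL_HR: "m \<le> N \<Longrightarrow> FL (qq^m) = HR (qq^m)"
proof (induction m rule: nat_less_induct)
  case (1 m)
  show ?case
  proof (cases m)
    case 0 then show ?thesis using FL_1 HR_1 by simp
  next
    case (Suc k)
    have kN: "k < N" using 1(2) Suc by simp
    define u where "u = qq^k"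
    have u: "u \<noteq> 0" using qq_nz by (simp add: u_def)
    have IH0: "FL u = HR u" using 1(1) Suc kN by (simp add: u_def)
    have IH1: "Dc qq (XX*iq) (XX*iq) g (-1) u * FL (u/qq) = Dc qq (XX*iq) (XX*iq) g (-1) u * HR (u/qq)"
    proof (cases k)
      case 0 then show ?thesis by (simp add: u_def Dc_def)
    next
      case (Suc k')
      have "u/qq = qq^k'" using qq_nz Suc by (simp add: u_def)
      moreover have "FL (qq^k') = HR (qq^k')" using 1(1) Suc \<open>m = Suc k\<close> kN by simp
      ultimately show ?thesis by simp
    qed
    have "FL (qq*u) = HR (qq*u)"
      by (rule stepeq[OF recL[OF u] recH[OF u _ K_nz] IH0 IH1 BL_nz[OF kN, folded u_def]])
         (use TT_nz kN in \<open>simp add: u_def\<close>)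
    then show ?thesis using Suc by (simp add: u_def)
  qed
qed

lemma qpoch_prod2: "qpoch a p k * qpoch b p k = (\<Prod>j<k. (1 - a*p^j) * (1 - b*p^j))"
  unfolding qpoch_def by (simp add: prod.distrib)

lemma FL_poly:
  assumes u: "u \<noteq> 0"
  shows "FL u = (\<Sum>k\<le>M. cL k * (\<Prod>j<k. (1 - g*qq^(2*j+1) - qq^j * lam qq g u)))"
  unfolding FL_def GS_def phi_def qpoch_prod2
proof (intro sum.cong refl arg_cong[where f="\<lambda>x. _ * x"] prod.cong)
  fix k j
  have e: "qq^(2*j+1) = qq * qq^j * qq^j" by (simp_all add: power_add mult_ac flip: power_mult; simp_all add: mult_2 power_add power2_eq_square eval_nat_numeral)
  show "(1 - inverse u * qq^j) * (1 - g*(-1)*qq*u*qq^j) = 1 - g*qq^(2*j+1) - qq^j * lam qq g u"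
    unfolding e lam_def using u by (simp add: field_simps)
qed

lemma HR_poly:
  assumes u: "u \<noteq> 0"
  shows "HR u = lam qq g u / (1 - g*qq) * (\<Sum>k\<le>n. cR k * (\<Prod>j<k.
       (1 + g^2*qq^(4*j+2) - 2*g*qq^(2*j+1) - qq^(2*j) * (lam qq g u)^2)))"
  unfolding HR_def SRf_def GS_def phi_def qpoch_prod2
proof (intro arg_cong[where f="\<lambda>x. _ * x"] sum.cong refl prod.cong)
  fix k j
  have e1: "qq^(4*j+2) = qq^2 * (qq^j)^4" by (simp_all add: power_add mult_ac flip: power_mult; simp_all add: mult_2 power_add power2_eq_square eval_nat_numeral)
  have e2: "qq^(2*j+1) = qq * (qq^j)^2" by (simp_all add: power_add mult_ac flip: power_mult; simp_all add: mult_2 power_add power2_eq_square eval_nat_numeral)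
  have e3: "qq^(2*j) = (qq^j)^2" by (simp_all add: power_add mult_ac flip: power_mult; simp_all add: mult_2 power_add power2_eq_square eval_nat_numeral)
  show "(1 - inverse (u^2) * (qq^2)^j) * (1 - g*qq*(g*iq)*(qq^2)*u^2*(qq^2)^j)
     = 1 + g^2*qq^(4*j+2) - 2*g*qq^(2*j+1) - qq^(2*j) * (lam qq g u)^2"
    unfolding e1 e2 e3 lam_def using u qq_nz
    by (simp add: field_simps power2_eq_square flip: power_mult; simp add: power_mult eval_nat_numeral power_add)
qed

lemma lam_inj:
  assumes "a \<le> N" "b \<le> N" "lam qq g (qq^a) = lam qq g (qq^b)"
  shows "a = b"
proof (rule ccontr)
  assume ab: "a \<noteq> b"
  define x where "x = qq^a"
  define y where "y = qq^b"
  have x: "x \<noteq> 0" and y: "y \<noteq> 0" using qq_nz by (auto simp: x_def y_def)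
  have xy: "x \<noteq> y" using qpow_neq[OF q0 q1 ab] by (simp add: x_def y_def)
  have "inverse x - g*qq*x = inverse y - g*qq*y" using assms(3) by (simp add: lam_def x_def y_def)
  then have "(x - y) * (1 + g*qq*x*y) = 0" using x y by (simp add: field_simps; simp add: algebra_simps)
  then have "1 + g*qq^(a+b+1) = 0" using xy by (simp add: x_def y_def power_add mult_ac)
  moreover have "a+b+1 \<le> 2*N+3" using assms by simp
  ultimately show False using h2 by blast
qed

lemma FL_HR_all:
  assumes M1: "M = 2*n+1" and u: "u \<noteq> 0"
  shows "FL u = HR u"
proof -
  have MN: "M \<le> N" using M_le .
  define PL where "PL = (\<Sum>k\<le>M. smult (cL k) (\<Prod>j<k. [:1 - g*qq^(2*j+1), - (qq^j):]))"
  define PR where "PR = smult (inverse (1 - g*qq)) ([:0, 1:] * (\<Sum>k\<le>n. smult (cR k) (\<Prod>j<k.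
       [:1 + g^2*qq^(4*j+2) - 2*g*qq^(2*j+1), 0, - (qq^(2*j)):])))"
  have vPL: "poly PL x = (\<Sum>k\<le>M. cL k * (\<Prod>j<k. (1 - g*qq^(2*j+1) - qq^j * x)))" for x
    unfolding PL_def poly_sum poly_smult poly_prod
    by (intro sum.cong refl arg_cong[where f="\<lambda>x. _ * x"] prod.cong) (simp add: algebra_simps)
  have vPR: "poly PR x = x / (1 - g*qq) * (\<Sum>k\<le>n. cR k * (\<Prod>j<k.
       (1 + g^2*qq^(4*j+2) - 2*g*qq^(2*j+1) - qq^(2*j) * x^2)))" for x
  proof -
    have "poly (\<Sum>k\<le>n. smult (cR k) (\<Prod>j<k. [:1 + g^2*qq^(4*j+2) - 2*g*qq^(2*j+1), 0, - (qq^(2*j)):])) x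
       = (\<Sum>k\<le>n. cR k * (\<Prod>j<k. (1 + g^2*qq^(4*j+2) - 2*g*qq^(2*j+1) - qq^(2*j) * x^2)))"
      unfolding poly_sum poly_smult poly_prod
      by (intro sum.cong refl arg_cong[where f="\<lambda>x. _ * x"] prod.cong) (simp add: algebra_simps power2_eq_square)
    then show ?thesis unfolding PR_def by (simp add: divide_inverse mult_ac)
  qed
  have pPL: "poly PL (lam qq g w) = FL w" if "w \<noteq> 0" for w
    unfolding FL_poly[OF that] vPL ..
  have pPR: "poly PR (lam qq g w) = HR w" if "w \<noteq> 0" for w
    unfolding HR_poly[OF that] vPR ..
  have dPL: "degree PL \<le> M"
    unfolding PL_def
  proof (rule degree_sum_le)
    fix k assume k: "k \<in> {..M}"
    have "degree (\<Prod>j<k. [:1 - g*qq^(2*j+1), - (qq^j):]) \<le> sum (degree \<circ> (\<lambda>j. [:1 - g*qq^(2*j+1), - (qq^j):])) {..<k}"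
      by (rule degree_prod_sum_le) simp
    also have "\<dots> \<le> (\<Sum>j<k. 1)" by (rule sum_mono) (simp add: degree_pCons_le)
    also have "\<dots> \<le> M" using k by simp
    finally show "degree (smult (cL k) (\<Prod>j<k. [:1 - g*qq^(2*j+1), - (qq^j):])) \<le> M"
      using degree_smult_le order_trans by blast
  qed simp
  have dPR: "degree PR \<le> M"
  proof -
    have "degree (\<Sum>k\<le>n. smult (cR k) (\<Prod>j<k. [:1 + g^2*qq^(4*j+2) - 2*g*qq^(2*j+1), 0, - (qq^(2*j)):])) \<le> 2*n"
    proof (rule degree_sum_le)
      fix k assume k: "k \<in> {..n}"
      have "degree (\<Prod>j<k. [:1 + g^2*qq^(4*j+2) - 2*g*qq^(2*j+1), 0, - (qq^(2*j)):])
          \<le> sum (degree \<circ> (\<lambda>j. [:1 + g^2*qq^(4*j+2) - 2*g*qq^(2*j+1), 0, - (qq^(2*j)):])) {..<k}"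
        by (rule degree_prod_sum_le) simp
      also have "\<dots> \<le> (\<Sum>j<k. 2)" by (rule sum_mono) (simp add: degree_pCons_le)
      also have "\<dots> \<le> 2*n" using k by simp
      finally show "degree (smult (cR k) (\<Prod>j<k. [:1 + g^2*qq^(4*j+2) - 2*g*qq^(2*j+1), 0, - (qq^(2*j)):])) \<le> 2*n"
        using degree_smult_le order_trans by blast
    qed simp
    then have "degree ([:0, 1:] * (\<Sum>k\<le>n. smult (cR k) (\<Prod>j<k. [:1 + g^2*qq^(4*j+2) - 2*g*qq^(2*j+1), 0, - (qq^(2*j)):]))) \<le> M"
    proof -
      fix S :: "complex poly"
      assume hS: "degree S \<le> 2*n"
      have "degree ([:0, 1:] * S) \<le> degree [:0, 1::complex:] + degree S" by (rule degree_mult_le)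
      moreover have "degree [:0, 1::complex:] = 1" by simp
      ultimately show "degree ([:0, 1:] * S) \<le> M" using hS M1 by linarith
    qed
    then show ?thesis unfolding PR_def using degree_smult_le order_trans by blast
  qed
  have D0: "PL - PR = 0"
  proof (rule ccontr)
    assume nz: "PL - PR \<noteq> 0"
    have fin: "finite {x. poly (PL - PR) x = 0}" by (rule poly_roots_finite[OF nz])
    have sub: "(\<lambda>m. lam qq g (qq^m)) ` {..N} \<subseteq> {x. poly (PL - PR) x = 0}"
      using FL_HR qq_nz by (auto simp: pPL pPR)
    have inj: "inj_on (\<lambda>m. lam qq g (qq^m)) {..N}"
      by (rule inj_onI) (use lam_inj in auto)
    have "N + 1 = card ((\<lambda>m. lam qq g (qq^m)) ` {..N})" using card_image[OF inj] by simp
    also have "\<dots> \<le> card {x. poly (PL - PR) x = 0}" by (rule card_mono[OF fin sub])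
    also have "\<dots> \<le> degree (PL - PR)" by (rule card_poly_roots_bound[OF nz])
    also have "\<dots> \<le> M" using dPL dPR by (rule degree_diff_le)
    finally show False using MN by simp
  qed
  then have "PL = PR" by simp
  then show ?thesis using pPL[OF u] pPR[OF u] by simp
qed

lemma gen_eq_u:
  assumes "u \<noteq> 0" "FL u = HR u"
  shows "GS (cf (inverse (qq^(2*n+1))) (inverse (qq^(2*(N-n)))) XX (-XX) (g*qq) qq) qq (g*(-1)) M u
     = (inverse u - g*(u*qq)) / (1 - g*qq) * GS (cf (inverse ((qq^2)^n)) (qq^(2*n+1) * inverse (qq^(2*N))) (inverse ((qq^2)^N)) (g*qq^2) (g*qq^3) (qq^2)) (qq^2) (g^2) n (u^2)"
proof -
  have e: "g*qq*(g*iq) = g^2" using qq_nz by (simp add: power2_eq_square)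
  show ?thesis using assms(2) unfolding FL_def cL_def HR_def SRf_def cR_def lam_def e
    by (simp add: mult_ac)
qed

lemma gen_nat:
  assumes "m \<le> N"
  shows "GS (cf (inverse (qq^(2*n+1))) (inverse (qq^(2*(N-n)))) XX (-XX) (g*qq) qq) qq (g*(-1)) M (qq^m)
     = (inverse (qq^m) - g*(qq^m*qq)) / (1 - g*qq) * GS (cf (inverse ((qq^2)^n)) (qq^(2*n+1) * inverse (qq^(2*N))) (inverse ((qq^2)^N)) (g*qq^2) (g*qq^3) (qq^2)) (qq^2) (g^2) n ((qq^m)^2)"
  by (rule gen_eq_u) (use qq_nz FL_HR[OF assms] in auto)

lemma gen_all:
  assumes "M = 2*n+1" "u \<noteq> 0"
  shows "GS (cf (inverse (qq^(2*n+1))) (inverse (qq^(2*(N-n)))) XX (-XX) (g*qq) qq) qq (g*(-1)) M u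
     = (inverse u - g*(u*qq)) / (1 - g*qq) * GS (cf (inverse ((qq^2)^n)) (qq^(2*n+1) * inverse (qq^(2*N))) (inverse ((qq^2)^N)) (g*qq^2) (g*qq^3) (qq^2)) (qq^2) (g^2) n (u^2)"
  by (rule gen_eq_u) (use assms FL_HR_all in auto)

end


lemma qpoch_tendsto[tendsto_intros]:
  "(f \<longlongrightarrow> a) F \<Longrightarrow> ((\<lambda>x. qpoch (f x) p k) \<longlongrightarrow> qpoch a p k) F"
  unfolding qpoch_def by (intro tendsto_intros)

lemma qpw_mult_nat: "0 < q \<Longrightarrow> qpw q (of_nat k * s) = qpw q s ^ k"
  by (simp add: qpw_exp mult.assoc exp_of_nat_mult)

lemma final_x:
  fixes q :: real and N n M :: nat and \<gamma> x :: complex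
  assumes q0: "0 < q" and q1: "q < 1" and nN: "n \<le> N"
    and A1: "\<forall>j::nat. \<gamma> * qpw q 1 \<noteq> qpw q (- of_nat j)"
    and A2: "\<forall>j::nat. \<gamma> * qpw q 2 \<noteq> qpw q (- of_nat j)"
    and A3: "\<forall>j::nat. \<gamma> * qpw q 3 \<noteq> qpw q (- of_nat j)"
    and hM: "(M = 2*n+1 \<and> 2*n+1 \<le> N) \<or> (M = 2*(N-n) \<and> N < 2*n+1)"
    and hx: "M = 2*n+1 \<or> (\<exists>m\<le>N. x = of_nat m)"
  shows "phi43 (qpw q (- (2 * of_nat n + 1))) (qpw q (- 2 * (of_nat N - of_nat n))) (qpw q (- x))
            (- \<gamma> * qpw q (x + 1))
            (qpw q (- of_nat N)) (- qpw q (- of_nat N)) (\<gamma> * qpw q 1) (qpw q 1)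
    = (qpw q (- x) - \<gamma> * qpw q (x + 1)) / (1 - \<gamma> * qpw q 1) *
      phi43 (qpw q (- 2 * of_nat n)) (qpw q (2 * of_nat n - 2 * of_nat N + 1)) (qpw q (- 2 * x))
            (\<gamma>\<^sup>2 * qpw q (2 * x + 2))
            (qpw q (- 2 * of_nat N)) (\<gamma> * qpw q 2) (\<gamma> * qpw q 3) (qpw q 2)"
proof -
  define qq where "qq = complex_of_real q"
  have qq: "qq \<noteq> 0" using q0 by (simp add: qq_def)
  define u where "u = qpw q x"
  have u: "u \<noteq> 0" using qpw_nz[OF q0] by (simp add: u_def)
  have pn: "qpw q (of_nat k) = qq^k" for k using qpw_nat[OF q0] by (simp add: qq_def)
  have pm: "qpw q (- a) = inverse (qpw q a)" for a using qpw_minus[OF q0] .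
  have r1: "qpw q (- (2 * of_nat n + 1)) = inverse (qq^(2*n+1))"
  proof -
    have "(2 * of_nat n + 1 :: complex) = of_nat (2*n+1)" by simp
    then show ?thesis using pm pn by metis
  qed
  have r2: "qpw q (- 2 * (of_nat N - of_nat n)) = inverse (qq^(2*(N-n)))"
  proof -
    have "(- 2 * (of_nat N - of_nat n) :: complex) = - of_nat (2*(N-n))" using nN by (simp add: of_nat_diff)
    then show ?thesis using pm pn by metis
  qed
  have r3: "qpw q (- x) = inverse u" unfolding u_def by (rule pm)
  have r4: "qpw q (x + 1) = u * qq" unfolding u_def using qpw_add[OF q0] qpw_1[OF q0] by (simp add: qq_def)
  have r5: "qpw q (- of_nat N) = inverse (qq^N)" using pm pn by metis
  have r6: "qpw q 1 = qq" using qpw_1[OF q0] by (simp add: qq_def)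
  have r7: "qpw q 2 = qq^2" using qpw_2[OF q0] by (simp add: qq_def)
  have r8: "qpw q 3 = qq^3" using qpw_3[OF q0] by (simp add: qq_def)
  have r9: "qpw q (- 2 * of_nat n) = inverse ((qq^2)^n)"
  proof -
    have "(- 2 * of_nat n :: complex) = - of_nat (2*n)" by simp
    then show ?thesis using pm pn by (metis power_mult)
  qed
  have r10: "qpw q (2 * of_nat n - 2 * of_nat N + 1) = qq^(2*n+1) * inverse (qq^(2*N))"
  proof -
    have "(2 * of_nat n - 2 * of_nat N + 1 :: complex) = of_nat (2*n+1) + - of_nat (2*N)" by simp
    then show ?thesis using pm pn qpw_add[OF q0] by metis
  qed
  have r11: "qpw q (- 2 * x) = inverse (u^2)"
  proof -
    have "(- 2 * x :: complex) = - (of_nat 2 * x)" by simp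
    then show ?thesis using pm qpw_mult_nat[OF q0, of 2 x] by (simp add: u_def)
  qed
  have r12: "qpw q (2 * x + 2) = u^2 * qq^2"
  proof -
    have "(2 * x + 2 :: complex) = of_nat 2 * x + of_nat 2" by simp
    then show ?thesis using qpw_add[OF q0] qpw_mult_nat[OF q0, of 2 x] pn[of 2] by (simp add: u_def)
  qed
  have r13: "qpw q (- 2 * of_nat N) = inverse ((qq^2)^N)"
  proof -
    have "(- 2 * of_nat N :: complex) = - of_nat (2*N)" by simp
    then show ?thesis using pm pn by (metis power_mult)
  qed
  have MN: "M \<le> N" using hM by auto
  define fL where "fL = (\<lambda>g. GS (cf (inverse (qq^(2*n+1))) (inverse (qq^(2*(N-n)))) (inverse (qq^N)) (- inverse (qq^N)) (g*qq) qq) qq (g*(-1)) M u)"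
  define fR where "fR = (\<lambda>g. (inverse u - g*(u*qq)) / (1 - g*qq) * GS (cf (inverse ((qq^2)^n)) (qq^(2*n+1) * inverse (qq^(2*N))) (inverse ((qq^2)^N)) (g*qq^2) (g*qq^3) (qq^2)) (qq^2) (g^2) n (u^2))"
  have phiL: "phi43 (inverse (qq^(2*n+1))) (inverse (qq^(2*(N-n)))) (inverse u) (- \<gamma> * (u * qq))
      (inverse (qq^N)) (- inverse (qq^N)) (\<gamma> * qq) qq = fL \<gamma>"
    unfolding fL_def
  proof (rule phi43_GS[where K'=M])
    show "qq \<noteq> 0" by (rule qq)
    show "- \<gamma> * (u * qq) = \<gamma> * (-1) * qq * u" by simp
    show "M \<le> M" ..
    show "\<exists>a\<in>{inverse (qq^(2*n+1)), inverse (qq^(2*(N-n))), inverse u, - \<gamma> * (u * qq)}. a = inverse (qq^M)"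
      using hM by auto
  qed simp
  have phiR: "phi43 (inverse ((qq^2)^n)) (qq^(2*n+1) * inverse (qq^(2*N))) (inverse (u^2)) (\<gamma>\<^sup>2 * (u^2 * qq^2))
      (inverse ((qq^2)^N)) (\<gamma> * qq^2) (\<gamma> * qq^3) (qq^2)
      = GS (cf (inverse ((qq^2)^n)) (qq^(2*n+1) * inverse (qq^(2*N))) (inverse ((qq^2)^N)) (\<gamma>*qq^2) (\<gamma>*qq^3) (qq^2)) (qq^2) (\<gamma>^2) n (u^2)"
  proof (rule phi43_GS[where K'=n])
    show "qq^2 \<noteq> 0" using qq by simp
    show "\<gamma>\<^sup>2 * (u^2 * qq^2) = \<gamma>^2 * qq^2 * u^2" by (simp add: mult_ac)
  qed auto
  have gen: "fL g = fR g" if g1: "\<forall>j\<le>2*N+3. g*qq^j \<noteq> 1" and g2: "\<forall>j\<le>2*N+3. g*qq^j \<noteq> -1" for g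
  proof -
    from hx show ?thesis
    proof
      assume hM1: "M = 2*n+1"
      show ?thesis unfolding fL_def fR_def
        using gen_all[OF q0 q1 nN g1[unfolded qq_def] g2[unfolded qq_def] hM hM1 u] by (simp add: qq_def)
    next
      assume "\<exists>m\<le>N. x = of_nat m"
      then obtain m where m: "m \<le> N" "x = of_nat m" by blast
      have um: "u = qq^m" using pn m(2) by (simp add: u_def)
      show ?thesis unfolding fL_def fR_def um
        using gen_nat[OF q0 q1 nN g1[unfolded qq_def] g2[unfolded qq_def] hM m(1)] by (simp add: qq_def)
    qed
  qed
  define B where "B = (\<lambda>j. inverse (qq^j)) ` {..2*N+3} \<union> (\<lambda>j. - inverse (qq^j)) ` {..2*N+3}"
  have finB: "finite B" unfolding B_def by simp
  have notB: "(\<forall>j\<le>2*N+3. g*qq^j \<noteq> 1) \<and> (\<forall>j\<le>2*N+3. g*qq^j \<noteq> -1)" if "g \<notin> B" for g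
  proof (intro conjI allI impI)
    fix j assume j: "j \<le> 2*N+3"
    show "g*qq^j \<noteq> 1"
    proof
      assume "g*qq^j = 1"
      then have "g = inverse (qq^j)" using qq by (simp add: field_simps)
      then show False using that j unfolding B_def by auto
    qed
    show "g*qq^j \<noteq> -1"
    proof
      assume "g*qq^j = -1"
      then have "g = - inverse (qq^j)" using qq by (simp add: field_simps)
      then show False using that j unfolding B_def by auto
    qed
  qed
  have ev: "eventually (\<lambda>g. g \<notin> B) (at \<gamma>)"
  proof -
    have o: "open (- (B - {\<gamma>}))" by (rule open_Compl, rule finite_imp_closed) (use finB in simp)
    have "\<gamma> \<in> - (B - {\<gamma>})" by simp
    from eventually_at_in_open[OF o this] show ?thesis by (rule eventually_mono) auto
  qed
  have evEq: "eventually (\<lambda>g. fL g = fR g) (at \<gamma>)"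
    using ev by (rule eventually_mono) (use gen notB in blast)
  have A1': "\<gamma> * qq * qq^j \<noteq> 1" for j
  proof
    assume "\<gamma> * qq * qq^j = 1"
    then have "\<gamma> * qq = inverse (qq^j)" using qq by (simp add: field_simps)
    then show False using A1 r6 pm pn by metis
  qed
  have A2': "\<gamma> * qq^2 * qq^j \<noteq> 1" for j
  proof
    assume "\<gamma> * qq^2 * qq^j = 1"
    then have "\<gamma> * qq^2 = inverse (qq^j)" using qq by (simp add: field_simps)
    then show False using A2 r7 pm pn by metis
  qed
  have A3': "\<gamma> * qq^3 * qq^j \<noteq> 1" for j
  proof
    assume "\<gamma> * qq^3 * qq^j = 1"
    then have "\<gamma> * qq^3 = inverse (qq^j)" using qq by (simp add: field_simps)
    then show False using A3 r8 pm pn by metis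
  qed
  have K: "1 - \<gamma>*qq \<noteq> 0" using A1'[of 0] by simp
  have nX: "inverse (qq^N) * qq^j \<noteq> 1" if "j < N" for j
    using qpow_neq[OF q0 q1, of j N] that qq by (auto simp: field_simps qq_def)
  have nX2: "- inverse (qq^N) * qq^j \<noteq> 1" for j
  proof -
    have "- inverse (qq^N) * qq^j = - of_real (q^j / q^N)" by (simp add: field_simps qq_def)
    moreover have "q^j / q^N > 0" using q0 by simp
    ultimately show ?thesis
      by (metis add.inverse_inverse dual_order.asym neg_0_less_iff_less of_real_1 of_real_eq_iff of_real_minus zero_less_one)
  qed
  have nq: "qq * qq^j \<noteq> 1" for j using qpow_neq[OF q0 q1, of "Suc j" 0] by (simp add: qq_def)
  have nX3: "inverse ((qq^2)^N) * (qq^2)^j \<noteq> 1" if "j < N" for j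
  proof -
    have "2*j \<noteq> 2*N" using that by simp
    then have "qq^(2*j) \<noteq> qq^(2*N)" using qpow_neq[OF q0 q1] by (simp add: qq_def)
    then show ?thesis using qq by (simp add: field_simps flip: power_mult)
  qed
  have nq2: "qq^2 * (qq^2)^j \<noteq> 1" for j
  proof -
    have "qq^(2*j+2) \<noteq> qq^0" using qpow_neq[OF q0 q1, of "2*j+2" 0] by (simp add: qq_def)
    then show ?thesis by (simp add: field_simps flip: power_mult power_add power_Suc)
  qed
  have nzL: "qpoch (inverse (qq^N)) qq k * qpoch (- inverse (qq^N)) qq k * qpoch (\<gamma>*qq) qq k * qpoch qq qq k \<noteq> 0"
    if "k \<le> M" for k
    using that MN qpoch_nz[of k "inverse (qq^N)" qq] qpoch_nz[of k "- inverse (qq^N)" qq]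
      qpoch_nz[of k "\<gamma>*qq" qq] qpoch_nz[of k qq qq] nX nX2 A1' nq by force
  have nzR: "qpoch (inverse ((qq^2)^N)) (qq^2) k * qpoch (\<gamma>*qq^2) (qq^2) k * qpoch (\<gamma>*qq^3) (qq^2) k * qpoch (qq^2) (qq^2) k \<noteq> 0"
    if "k \<le> n" for k
  proof -
    have a: "qpoch (inverse ((qq^2)^N)) (qq^2) k \<noteq> 0" by (rule qpoch_nz) (use nX3 that nN in auto)
    have b: "qpoch (\<gamma>*qq^2) (qq^2) k \<noteq> 0" by (rule qpoch_nz) (use A2' in \<open>simp flip: power_mult\<close>)
    have c: "qpoch (\<gamma>*qq^3) (qq^2) k \<noteq> 0" by (rule qpoch_nz) (use A3' in \<open>simp flip: power_mult\<close>)
    have d: "qpoch (qq^2) (qq^2) k \<noteq> 0" by (rule qpoch_nz) (use nq2 in auto)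
    show ?thesis using a b c d by simp
  qed
  have tL: "(fL \<longlongrightarrow> fL \<gamma>) (at \<gamma>)"
    unfolding fL_def GS_def cf_def phi_def
    by (intro tendsto_intros) (use nzL in auto)
  have tR: "(fR \<longlongrightarrow> fR \<gamma>) (at \<gamma>)"
    unfolding fR_def GS_def cf_def phi_def
    by (intro tendsto_intros) (use nzR K in auto)
  have "(fR \<longlongrightarrow> fL \<gamma>) (at \<gamma>)" using tendsto_cong[OF evEq] tL by simp
  then have key: "fL \<gamma> = fR \<gamma>" using tR by (rule tendsto_unique[OF trivial_limit_at])
  show ?thesis
    unfolding r1 r2 r3 r4 r5 r6 r7 r8 r9 r10 r11 r12 r13 phiL phiR
    using key unfolding fR_def by (simp add: mult_ac)
qed


theorem mainTheorem10:
  fixes q :: real and N n :: nat and \<gamma> :: complex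
  assumes "0 < q" and "q < 1" and "0 < N" and "n \<le> N"
    and "\<forall>j::nat. \<gamma> * qpw q 1 \<noteq> qpw q (- of_nat j)"
    and "\<forall>j::nat. \<gamma> * qpw q 2 \<noteq> qpw q (- of_nat j)"
    and "\<forall>j::nat. \<gamma> * qpw q 3 \<noteq> qpw q (- of_nat j)"
  defines "E \<equiv> \<lambda>x::complex.
      phi43 (qpw q (- (2 * of_nat n + 1))) (qpw q (- 2 * (of_nat N - of_nat n))) (qpw q (- x))
            (- \<gamma> * qpw q (x + 1))
            (qpw q (- of_nat N)) (- qpw q (- of_nat N)) (\<gamma> * qpw q 1) (qpw q 1)
    = (qpw q (- x) - \<gamma> * qpw q (x + 1)) / (1 - \<gamma> * qpw q 1) *
      phi43 (qpw q (- 2 * of_nat n)) (qpw q (2 * of_nat n - 2 * of_nat N + 1)) (qpw q (- 2 * x))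
            (\<gamma>\<^sup>2 * qpw q (2 * x + 2))
            (qpw q (- 2 * of_nat N)) (\<gamma> * qpw q 2) (\<gamma> * qpw q 3) (qpw q 2)"
  shows "(2 * n + 1 \<le> N \<longrightarrow> (\<forall>x::complex. E x))
       \<and> (2 * n + 1 > N \<longrightarrow> (\<forall>x\<in>{0..N}. E (of_nat x)))"
proof -
  have EE: "E x" if hx: "2*n+1 \<le> N \<or> (\<exists>m\<le>N. x = of_nat m)" for x
  proof (cases "2*n+1 \<le> N")
    case True
    show ?thesis unfolding E_def
      by (rule final_x[where M="2*n+1"]) (use assms(1,2,4-7) True in auto)
  next
    case False
    then obtain m where m: "m \<le> N" "x = of_nat m" using hx by auto
    show ?thesis unfolding E_def
      by (rule final_x[where M="2*(N-n)"]) (use assms(1,2,4-7) False m in auto)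
  qed
  show ?thesis using EE by auto
qed

end
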